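(* Let $\varphi,\psi$ be independent random variables uniform on $[0,\pi]$, and set $(\alpha,\beta)=(\varphi,\psi)$ if $\varphi+\psi<\pi$ and $(\alpha,\beta)=(\pi-\psi,\pi-\varphi)$ if $\varphi+\psi>\pi$. Let $T$ be the triangle with vertices $A=(0,0)$, $B=(1,0)$ and \[ C=\left(\frac{\tan\beta}{\tan\alpha+\tan\beta},\frac{\tan\alpha\tan\beta}{\tan\alpha+\tan\beta}\right). \] Let $a=\|B-C\|$ and $b=\|A-C\|$. Then $\max\{a,b\}$ has density $\dfrac{4}{\pi^2}\dfrac{\ln(x)-\ln|1-x|}{x}$ for $x>1/2$, and $\min\{a,b\}$ has density \[ \begin{cases}\dfrac{4}{\pi^2}\dfrac{\ln(1+y)-\ln(1-y)}{y} & \text{if } 0<y<1/2,\\[2mm] \dfrac{4}{\pi^2}\dfrac{\ln(1+y)-\ln(y)}{y} & \text{if } y>1/2.\end{cases} \]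
   Context: $\|\cdot\|$ is the Euclidean norm. *)

theory Defs
  imports "HOL-Probability.Probability"
begin

text \<open>The angles (alpha, beta) obtained from (phi, psi); on the null event
  phi + psi = pi we (arbitrarily) use the second branch.\<close>
definition angles :: "real \<Rightarrow> real \<Rightarrow> real \<times> real" where
  "angles \<phi> \<psi> = (if \<phi> + \<psi> < pi then (\<phi>, \<psi>) else (pi - \<psi>, pi - \<phi>))"

definition vertexC :: "real \<Rightarrow> real \<Rightarrow> real \<times> real" where
  "vertexC \<alpha> \<beta> = (tan \<beta> / (tan \<alpha> + tan \<beta>), tan \<alpha> * tan \<beta> / (tan \<alpha> + tan \<beta>))"

definition side_a :: "real \<Rightarrow> real \<Rightarrow> real" where
  "side_a \<phi> \<psi> = norm ((1, 0) - vertexC (fst (angles \<phi> \<psi>)) (snd (angles \<phi> \<psi>)))"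

definition side_b :: "real \<Rightarrow> real \<Rightarrow> real" where
  "side_b \<phi> \<psi> = norm ((0, 0) - vertexC (fst (angles \<phi> \<psi>)) (snd (angles \<phi> \<psi>)))"

definition max_density :: "real \<Rightarrow> real" where
  "max_density x = (if x > 1/2 then 4 / pi\<^sup>2 * ((ln x - ln \<bar>1 - x\<bar>) / x) else 0)"

definition min_density :: "real \<Rightarrow> real" where
  "min_density y = (if 0 < y \<and> y < 1/2 then 4 / pi\<^sup>2 * ((ln (1 + y) - ln (1 - y)) / y)
                    else if y > 1/2 then 4 / pi\<^sup>2 * ((ln (1 + y) - ln y) / y)
                    else 0)"

end

theory Submission
  imports Defs
begin

lemma trigB:
  fixes \<alpha> \<beta> :: real
  assumes "sin (\<alpha> + \<beta>) \<noteq> 0"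
  shows "1 + (sin \<alpha> / sin (\<alpha>+\<beta>))\<^sup>2 - 2 * (sin \<alpha> / sin (\<alpha>+\<beta>)) * cos \<beta> = (sin \<beta> / sin (\<alpha>+\<beta>))\<^sup>2"
proof -
  have e: "(sin (\<alpha>+\<beta>))\<^sup>2 + (sin \<alpha>)\<^sup>2 - 2 * sin \<alpha> * sin (\<alpha>+\<beta>) * cos \<beta> = (sin \<beta>)\<^sup>2"
  proof -
    have 1: "(sin (\<alpha>+\<beta>))\<^sup>2 - 2 * sin \<alpha> * sin (\<alpha>+\<beta>) * cos \<beta> = (cos \<alpha>)\<^sup>2 * (sin \<beta>)\<^sup>2 - (sin \<alpha>)\<^sup>2 * (cos \<beta>)\<^sup>2"
      unfolding sin_add by (simp add: power2_eq_square algebra_simps)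
    have 2: "(sin \<alpha>)\<^sup>2 * (cos \<beta>)\<^sup>2 = (sin \<alpha>)\<^sup>2 - (sin \<alpha>)\<^sup>2 * (sin \<beta>)\<^sup>2"
      by (simp add: cos_squared_eq algebra_simps)
    have 3: "(cos \<alpha>)\<^sup>2 * (sin \<beta>)\<^sup>2 + (sin \<alpha>)\<^sup>2 * (sin \<beta>)\<^sup>2 = (sin \<beta>)\<^sup>2"
      by (metis distrib_right mult_1 sin_cos_squared_add add.commute)
    show ?thesis using 1 2 3 by linarith
  qed
  show ?thesis using assms e by (simp add: field_simps power2_eq_square)
qed

lemma sideA_eq:
  fixes \<alpha> \<beta> :: real
  assumes "cos \<alpha> \<noteq> 0" "cos \<beta> \<noteq> 0" "sin (\<alpha>+\<beta>) \<noteq> 0"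
  shows "norm ((1,0) - vertexC \<alpha> \<beta>) = \<bar>sin \<alpha> / sin (\<alpha>+\<beta>)\<bar>"
    and "norm ((0,0) - vertexC \<alpha> \<beta>) = \<bar>sin \<beta> / sin (\<alpha>+\<beta>)\<bar>"
proof -
  have tt: "tan \<alpha> + tan \<beta> = sin (\<alpha>+\<beta>) / (cos \<alpha> * cos \<beta>)"
    using assms by (simp add: tan_def sin_add field_simps)
  have ne: "tan \<alpha> + tan \<beta> \<noteq> 0" using tt assms by simp
  have c1: "(sin \<alpha>)\<^sup>2 + (cos \<alpha>)\<^sup>2 = 1" "(sin \<beta>)\<^sup>2 + (cos \<beta>)\<^sup>2 = 1" by simp_all
  have "(1 - tan \<beta> / (tan \<alpha> + tan \<beta>))\<^sup>2 + (tan \<alpha> * tan \<beta> / (tan \<alpha> + tan \<beta>))\<^sup>2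
        = (sin \<alpha> / sin (\<alpha>+\<beta>))\<^sup>2" (is ?H)
  proof -
    have "1 - tan \<beta> / (tan \<alpha> + tan \<beta>) = tan \<alpha> / (tan \<alpha> + tan \<beta>)" using ne by (simp add: field_simps)
    moreover have "(tan \<alpha> / (tan \<alpha> + tan \<beta>))\<^sup>2 + (tan \<alpha> * tan \<beta> / (tan \<alpha> + tan \<beta>))\<^sup>2
        = (tan \<alpha>)\<^sup>2 * (1 + (tan \<beta>)\<^sup>2) / (tan \<alpha> + tan \<beta>)\<^sup>2"
      using ne by (simp add: power_divide add_divide_distrib[symmetric] algebra_simps)
    moreover have "1 + (tan \<beta>)\<^sup>2 = 1 / (cos \<beta>)\<^sup>2" using assms c1(2)
      by (simp add: tan_def field_simps)
    ultimately show ?thesis using assms unfolding tt by (simp add: tan_def field_simps power2_eq_square)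
  qed
  then show "norm ((1,0) - vertexC \<alpha> \<beta>) = \<bar>sin \<alpha> / sin (\<alpha>+\<beta>)\<bar>"
    proof -
    assume h: ?H
    have "(1::real,0::real) - vertexC \<alpha> \<beta> = (1 - tan \<beta> / (tan \<alpha> + tan \<beta>), - (tan \<alpha> * tan \<beta> / (tan \<alpha> + tan \<beta>)))"
      by (simp add: vertexC_def)
    then show ?thesis by (simp only: norm_Pair real_norm_def power2_abs power2_minus h real_sqrt_abs)
  qed
  have "(tan \<beta> / (tan \<alpha> + tan \<beta>))\<^sup>2 + (tan \<alpha> * tan \<beta> / (tan \<alpha> + tan \<beta>))\<^sup>2
        = (sin \<beta> / sin (\<alpha>+\<beta>))\<^sup>2" (is ?H)
  proof -
    have "(tan \<beta> / (tan \<alpha> + tan \<beta>))\<^sup>2 + (tan \<alpha> * tan \<beta> / (tan \<alpha> + tan \<beta>))\<^sup>2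
        = (tan \<beta>)\<^sup>2 * (1 + (tan \<alpha>)\<^sup>2) / (tan \<alpha> + tan \<beta>)\<^sup>2"
      using ne by (simp add: power_divide add_divide_distrib[symmetric] algebra_simps)
    moreover have "1 + (tan \<alpha>)\<^sup>2 = 1 / (cos \<alpha>)\<^sup>2" using assms c1(1)
      by (simp add: tan_def field_simps)
    ultimately show ?thesis using assms unfolding tt by (simp add: tan_def field_simps power2_eq_square)
  qed
  then show "norm ((0,0) - vertexC \<alpha> \<beta>) = \<bar>sin \<beta> / sin (\<alpha>+\<beta>)\<bar>"
    proof -
    assume h: ?H
    have "(0::real,0::real) - vertexC \<alpha> \<beta> = (- (tan \<beta> / (tan \<alpha> + tan \<beta>)), - (tan \<alpha> * tan \<beta> / (tan \<alpha> + tan \<beta>)))"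
      by (simp add: vertexC_def)
    then show ?thesis by (simp only: norm_Pair real_norm_def power2_abs power2_minus h real_sqrt_abs)
  qed
qed

lemma nn_integral_incseq_sets:
  fixes F :: "real \<Rightarrow> ennreal"
  assumes [measurable]: "F \<in> borel_measurable borel" and inc: "incseq A" and [measurable]: "\<And>i. A i \<in> sets borel"
  shows "(\<integral>\<^sup>+x. F x * indicator (\<Union>i. A i) x \<partial>lborel) = (SUP i. \<integral>\<^sup>+x. F x * indicator (A i) x \<partial>lborel)"
proof -
  have pt: "(SUP i. F x * indicator (A i) x) = F x * indicator (\<Union>i. A i) x" for x
  proof (cases "x \<in> (\<Union>i. A i)")
    case True
    then obtain j where j: "x \<in> A j" by auto
    have "(SUP i. F x * indicator (A i) x) = F x"
    proof (rule antisym)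
      show "(SUP i. F x * indicator (A i) x) \<le> F x"
        by (rule SUP_least) (auto simp: indicator_def)
      show "F x \<le> (SUP i. F x * indicator (A i) x)"
        using j by (intro SUP_upper2[of j]) auto
    qed
    then show ?thesis using True by simp
  next
    case False
    then show ?thesis by (auto simp: indicator_def)
  qed
  have "incseq (\<lambda>i x. F x * indicator (A i) x)"
    using inc by (auto simp: incseq_def le_fun_def indicator_def subset_eq intro!: mult_left_mono)
  from nn_integral_monotone_convergence_SUP[OF this, of lborel]
  show ?thesis by (simp add: pt)
qed

definition Bf :: "real \<Rightarrow> real \<Rightarrow> real" where
  "Bf x \<beta> = sqrt (1 + x\<^sup>2 - 2 * x * cos \<beta>)"

lemma g_mono:
  fixes x y \<beta> :: real
  assumes "0 < \<beta>" "0 \<le> x" "x \<le> y" "y + \<beta> < pi"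
  shows "sin x / sin (x + \<beta>) \<le> sin y / sin (y + \<beta>)"
proof -
  have p1: "sin (x+\<beta>) > 0" using assms by (intro sin_gt_zero) auto
  have p2: "sin (y+\<beta>) > 0" using assms by (intro sin_gt_zero) auto
  have "sin (y - x) \<ge> 0" using assms by (intro sin_ge_zero) auto
  moreover have "sin \<beta> \<ge> 0" using assms by (intro sin_ge_zero) auto
  ultimately have "sin \<beta> * sin (y - x) \<ge> 0" by simp
  then have "sin x * sin (y+\<beta>) \<le> sin y * sin (x+\<beta>)"
    unfolding sin_add sin_diff by (simp add: algebra_simps)
  then show ?thesis using p1 p2 by (simp add: divide_simps mult.commute)
qed

lemma Bf_eq:
  fixes \<alpha> \<beta> :: real
  assumes "sin (\<alpha>+\<beta>) > 0" "sin \<beta> \<ge> 0"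
  shows "Bf (sin \<alpha> / sin (\<alpha>+\<beta>)) \<beta> = sin \<beta> / sin (\<alpha>+\<beta>)"
  unfolding Bf_def using trigB[of \<alpha> \<beta>] assms by simp

lemma g_deriv:
  fixes \<alpha> \<beta> :: real
  assumes "sin (\<alpha>+\<beta>) \<noteq> 0"
  shows "((\<lambda>a. sin a / sin (a+\<beta>)) has_real_derivative sin \<beta> / (sin (\<alpha>+\<beta>))\<^sup>2) (at \<alpha>)"
proof -
  have e: "cos \<alpha> * sin (\<alpha>+\<beta>) - sin \<alpha> * cos (\<alpha>+\<beta>) = sin \<beta>"
    using sin_diff[of "\<alpha>+\<beta>" \<alpha>] by (simp add: algebra_simps)
  have d: "((\<lambda>a. sin a / sin (a+\<beta>)) has_real_derivative
      (cos \<alpha> * sin (\<alpha>+\<beta>) - (cos (\<alpha>+\<beta>) * 1) * sin \<alpha>) / (sin (\<alpha>+\<beta>) ^ Suc (Suc 0))) (at \<alpha>)"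
    by (intro DERIV_quotient DERIV_sin DERIV_add DERIV_ident DERIV_const assms)
       (auto intro!: derivative_eq_intros)
  show ?thesis
    by (rule DERIV_cong[OF d]) (use e in \<open>simp add: power2_eq_square algebra_simps\<close>)
qed

lemma sub1:
  fixes H :: "real \<times> real \<Rightarrow> ennreal" and \<beta> :: real
  assumes Hm[measurable]: "H \<in> borel_measurable borel" and b: "0 < \<beta>" "\<beta> < pi"
  shows "(\<integral>\<^sup>+\<alpha>. indicator {0<..<pi-\<beta>} \<alpha> * H (sin \<alpha> / sin (\<alpha>+\<beta>), sin \<beta> / sin (\<alpha>+\<beta>)) \<partial>lborel)
       = (\<integral>\<^sup>+x. indicator {0<..} x * H (x, Bf x \<beta>) * ennreal (sin \<beta> / (Bf x \<beta>)\<^sup>2) \<partial>lborel)"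
proof -
  define L where "L = pi - \<beta>"
  have L: "0 < L" "L < pi" using b by (auto simp: L_def)
  define g where "g a = sin a / sin (a+\<beta>)" for a
  define g' where "g' a = sin \<beta> / (sin (a+\<beta>))\<^sup>2" for a
  define t where "t n = L - L / real (n+2)" for n :: nat
  have t: "0 < t n" "t n < L" for n using L by (auto simp: t_def field_simps intro!: add_pos_nonneg)
  have tinc: "incseq t"
    unfolding incseq_def t_def using L by (auto intro!: divide_left_mono mult_pos_pos)
  have tlim: "t \<longlonglongrightarrow> L"
  proof -
    have "(\<lambda>n. L / real (n+2)) \<longlonglongrightarrow> 0"
      using LIMSEQ_ignore_initial_segment[OF lim_const_over_n[of L], of 2] by simp
    from tendsto_diff[OF tendsto_const[of L] this] show ?thesis by (simp add: t_def[abs_def] add.commute)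
  qed
  have sinpos: "0 \<le> a \<Longrightarrow> a < L \<Longrightarrow> sin (a+\<beta>) > 0" for a
    using b by (intro sin_gt_zero) (auto simp: L_def)
  have sinb: "sin \<beta> > 0" using b by (intro sin_gt_zero) auto
  define F where "F x = H (x, Bf x \<beta>) * ennreal (sin \<beta> / (Bf x \<beta>)\<^sup>2)" for x
  have Fm[measurable]: "F \<in> borel_measurable borel" unfolding F_def Bf_def by measurable
  have g0: "g 0 = 0" by (simp add: g_def)
  have gpos: "0 < a \<Longrightarrow> a < L \<Longrightarrow> g a > 0" for a
    using sinpos[of a] L by (auto simp: g_def intro!: divide_pos_pos sin_gt_zero)
  have step: "(\<integral>\<^sup>+x. F x * indicator {0<..g (t n)} x \<partial>lborel)
      = (\<integral>\<^sup>+\<alpha>. H (g \<alpha>, sin \<beta> / sin (\<alpha>+\<beta>)) * indicator {0<..t n} \<alpha> \<partial>lborel)" for n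
  proof -
    have "(\<integral>\<^sup>+x. (F x * indicator {0<..} x) * indicator {g 0..g (t n)} x \<partial>lborel)
        = (\<integral>\<^sup>+\<alpha>. (F (g \<alpha>) * indicator {0<..} (g \<alpha>)) * g' \<alpha> * indicator {0..t n} \<alpha> \<partial>lborel)"
    proof (rule nn_integral_substitution_aux)
      show "(\<lambda>x. F x * indicator {0<..} x) \<in> borel_measurable borel" by measurable
      show "0 \<le> F x * indicator {0<..} x" for x by simp
      show "(g has_real_derivative g' x) (at x)" if "x \<in> {0..t n}" for x
        unfolding g_def g'_def
        by (rule g_deriv) (use sinpos[of x] t[of n] that in auto)
      show "continuous_on {0..t n} g'"
        unfolding g'_def
        by (intro continuous_intros) (use sinpos t[of n] in \<open>fastforce dest: le_less_trans\<close>)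
      show "0 \<le> g' x" if "x \<in> {0..t n}" for x
        unfolding g'_def using sinb by simp
      show "0 < t n" by (rule t)
    qed
    also have "(\<lambda>x. (F x * indicator {0<..} x) * indicator {g 0..g (t n)} x) = (\<lambda>x. F x * indicator {0<..g (t n)} x)"
      by (auto simp: g0 indicator_def fun_eq_iff)
    also have "(\<lambda>\<alpha>. (F (g \<alpha>) * indicator {0<..} (g \<alpha>)) * g' \<alpha> * indicator {0..t n} \<alpha>)
        = (\<lambda>\<alpha>. H (g \<alpha>, sin \<beta> / sin (\<alpha>+\<beta>)) * indicator {0<..t n} \<alpha>)"
    proof
      fix \<alpha>
      show "(F (g \<alpha>) * indicator {0<..} (g \<alpha>)) * g' \<alpha> * indicator {0..t n} \<alpha>
          = H (g \<alpha>, sin \<beta> / sin (\<alpha>+\<beta>)) * indicator {0<..t n} \<alpha>"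
      proof (cases "0 < \<alpha> \<and> \<alpha> \<le> t n")
        case True
        then have a: "0 < \<alpha>" "\<alpha> < L" using t[of n] by auto
        have sp: "sin (\<alpha>+\<beta>) > 0" using sinpos[of \<alpha>] a by simp
        have Bf: "Bf (g \<alpha>) \<beta> = sin \<beta> / sin (\<alpha>+\<beta>)"
          unfolding g_def by (rule Bf_eq) (use sp sinb in auto)
        have "ennreal (sin \<beta> / (Bf (g \<alpha>) \<beta>)\<^sup>2) * ennreal (g' \<alpha>) = ennreal (sin \<beta> / (Bf (g \<alpha>) \<beta>)\<^sup>2 * g' \<alpha>)"
          using sinb by (subst ennreal_mult[symmetric]) (auto simp: g'_def)
        also have "sin \<beta> / (Bf (g \<alpha>) \<beta>)\<^sup>2 * g' \<alpha> = 1"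
          unfolding Bf g'_def using sp sinb by (simp add: field_simps power2_eq_square)
        finally have e: "ennreal (sin \<beta> / (Bf (g \<alpha>) \<beta>)\<^sup>2) * ennreal (g' \<alpha>) = 1" by simp
        show ?thesis using True gpos[OF a] e Bf
          by (simp add: F_def indicator_def mult.assoc)
      next
        case False
        then show ?thesis
          by (cases "\<alpha> = 0") (auto simp: g0 indicator_def)
      qed
    qed
    finally show ?thesis .
  qed
  have glim: "LIM a (at_left L). g a :> at_top"
    unfolding g_def
  proof (rule LIM_at_top_divide)
    show "(sin \<longlongrightarrow> sin \<beta>) (at_left L)"
    proof -
      have "(sin \<longlongrightarrow> sin L) (at_left L)" by (intro tendsto_intros)
      moreover have "sin L = sin \<beta>" by (simp add: L_def)
      ultimately show ?thesis by simp
    qed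
    show "0 < sin \<beta>" by (rule sinb)
    show "((\<lambda>a. sin (a+\<beta>)) \<longlongrightarrow> 0) (at_left L)"
    proof -
      have "((\<lambda>a. sin (a+\<beta>)) \<longlongrightarrow> sin (L+\<beta>)) (at_left L)" by (intro tendsto_intros)
      moreover have "sin (L+\<beta>) = 0" by (simp add: L_def)
      ultimately show ?thesis by simp
    qed
    show "\<forall>\<^sub>F a in at_left L. 0 < sin (a+\<beta>)"
      using eventually_at_left_real[OF L(1)] by eventually_elim (use sinpos in auto)
  qed
  have tlim': "filterlim t (at_left L) sequentially"
    using tlim t by (intro tendsto_imp_filterlim_at_left) auto
  have gtlim: "filterlim (\<lambda>n. g (t n)) at_top sequentially"
    by (rule filterlim_compose[OF glim tlim'])
  have U1: "(\<Union>n. {0<..g (t n)}) = {0<..}"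
  proof (intro equalityI subsetI)
    fix x :: real assume "x \<in> {0<..}"
    from gtlim[unfolded filterlim_at_top, rule_format, of x] obtain n where "x \<le> g (t n)"
      by (auto simp: eventually_sequentially)
    with \<open>x \<in> {0<..}\<close> show "x \<in> (\<Union>n. {0<..g (t n)})" by auto
  qed auto
  have U2: "(\<Union>n. {0<..t n}) = {0<..<L}"
  proof (intro equalityI subsetI)
    fix x :: real assume x: "x \<in> {0<..<L}"
    from order_tendstoD(1)[OF tlim, of x] x obtain n where "x < t n"
      by (auto simp: eventually_sequentially)
    with x show "x \<in> (\<Union>n. {0<..t n})" by (auto intro!: exI[of _ n])
  qed (use t in \<open>auto intro: le_less_trans\<close>)
  have inc1: "incseq (\<lambda>n. {0<..g (t n)})"
    unfolding incseq_def
  proof (intro allI impI subsetI)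
    fix m n :: nat and x assume "m \<le> n" "x \<in> {0<..g (t m)}"
    moreover have "g (t m) \<le> g (t n)"
      unfolding g_def
      using \<open>m \<le> n\<close> tinc t[of m] t[of n] b by (intro g_mono) (auto simp: incseq_def L_def less_imp_le)
    ultimately show "x \<in> {0<..g (t n)}" by auto
  qed
  have inc2: "incseq (\<lambda>n. {0<..t n})"
    using tinc unfolding incseq_def by (force intro: order_trans)
  have "(\<integral>\<^sup>+x. indicator {0<..} x * H (x, Bf x \<beta>) * ennreal (sin \<beta> / (Bf x \<beta>)\<^sup>2) \<partial>lborel)
      = (\<integral>\<^sup>+x. F x * indicator (\<Union>n. {0<..g (t n)}) x \<partial>lborel)"
    unfolding U1 F_def by (simp add: mult_ac)
  also have "\<dots> = (SUP n. \<integral>\<^sup>+x. F x * indicator {0<..g (t n)} x \<partial>lborel)"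
    by (rule nn_integral_incseq_sets[OF Fm inc1]) simp
  also have "\<dots> = (SUP n. \<integral>\<^sup>+\<alpha>. H (g \<alpha>, sin \<beta> / sin (\<alpha>+\<beta>)) * indicator {0<..t n} \<alpha> \<partial>lborel)"
    by (simp add: step)
  also have "\<dots> = (\<integral>\<^sup>+\<alpha>. H (g \<alpha>, sin \<beta> / sin (\<alpha>+\<beta>)) * indicator (\<Union>n. {0<..t n}) \<alpha> \<partial>lborel)"
    by (rule nn_integral_incseq_sets[symmetric, OF _ inc2]) (auto simp: g_def)
  also have "\<dots> = (\<integral>\<^sup>+\<alpha>. indicator {0<..<pi-\<beta>} \<alpha> * H (sin \<alpha> / sin (\<alpha>+\<beta>), sin \<beta> / sin (\<alpha>+\<beta>)) \<partial>lborel)"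
    unfolding U2 by (simp add: g_def L_def mult.commute)
  finally show ?thesis by simp
qed

lemma Q_bounds:
  fixes a \<beta> :: real
  assumes "0 < a"
  shows "(1-a)\<^sup>2 \<le> 1 + a\<^sup>2 - 2*a*cos \<beta>" "1 + a\<^sup>2 - 2*a*cos \<beta> \<le> (1+a)\<^sup>2"
    and "cos \<beta> < 1 \<Longrightarrow> (1-a)\<^sup>2 < 1 + a\<^sup>2 - 2*a*cos \<beta>"
    and "cos \<beta> > -1 \<Longrightarrow> 1 + a\<^sup>2 - 2*a*cos \<beta> < (1+a)\<^sup>2"
proof -
  have e1: "1 + a\<^sup>2 - 2*a*cos \<beta> - (1-a)\<^sup>2 = 2*a*(1 - cos \<beta>)" by (simp add: power2_eq_square algebra_simps)
  have e2: "(1+a)\<^sup>2 - (1 + a\<^sup>2 - 2*a*cos \<beta>) = 2*a*(1 + cos \<beta>)" by (simp add: power2_eq_square algebra_simps)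
  have c: "cos \<beta> \<le> 1" "-1 \<le> cos \<beta>" by simp_all
  have c2: "1 - cos \<beta> \<ge> 0" "1 + cos \<beta> \<ge> 0" using c by linarith+
  have p1: "2*a*(1 - cos \<beta>) \<ge> 0" "2*a*(1 + cos \<beta>) \<ge> 0" using assms c2 by simp_all
  show "(1-a)\<^sup>2 \<le> 1 + a\<^sup>2 - 2*a*cos \<beta>" using e1 p1 by linarith
  show "1 + a\<^sup>2 - 2*a*cos \<beta> \<le> (1+a)\<^sup>2" using e2 p1 by linarith
  show "cos \<beta> < 1 \<Longrightarrow> (1-a)\<^sup>2 < 1 + a\<^sup>2 - 2*a*cos \<beta>"
  proof -
    assume "cos \<beta> < 1"
    then have "2*a*(1 - cos \<beta>) > 0" using assms by simp
    then show ?thesis using e1 by linarith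
  qed
  show "cos \<beta> > -1 \<Longrightarrow> 1 + a\<^sup>2 - 2*a*cos \<beta> < (1+a)\<^sup>2"
  proof -
    assume "cos \<beta> > -1"
    then have "2*a*(1 + cos \<beta>) > 0" using assms by simp
    then show ?thesis using e2 by linarith
  qed
qed

lemma sub2:
  fixes H :: "real \<times> real \<Rightarrow> ennreal" and a :: real
  assumes Hm[measurable]: "H \<in> borel_measurable borel" and a: "0 < a" "a \<noteq> 1"
  shows "(\<integral>\<^sup>+\<beta>. indicator {0<..<pi} \<beta> * (H (a, Bf a \<beta>) * ennreal (sin \<beta> / (Bf a \<beta>)\<^sup>2)) \<partial>lborel)
       = (\<integral>\<^sup>+y. indicator {\<bar>1-a\<bar><..<1+a} y * H (a, y) * ennreal (1/(a*y)) \<partial>lborel)"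
proof -
  define Q where "Q \<beta> = 1 + a\<^sup>2 - 2*a*cos \<beta>" for \<beta>
  define g where "g \<beta> = Bf a \<beta>" for \<beta>
  define g' where "g' \<beta> = a * sin \<beta> / Bf a \<beta>" for \<beta>
  have g_def': "g \<beta> = sqrt (Q \<beta>)" for \<beta> by (simp add: g_def Bf_def Q_def)
  have pos1: "(1-a)\<^sup>2 > 0" using a by simp
  have Qlow: "Q \<beta> \<ge> (1-a)\<^sup>2" for \<beta> unfolding Q_def by (rule Q_bounds(1)[OF a(1)])
  have Qpos: "Q \<beta> > 0" for \<beta> using Qlow[of \<beta>] pos1 by linarith
  have Qne: "Q \<beta> \<noteq> 0" for \<beta> using Qpos[of \<beta>] by simp
  have gpos: "g \<beta> > 0" for \<beta> using Qpos by (simp add: g_def')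
  have g0: "g 0 = \<bar>1-a\<bar>"
  proof -
    have "Q 0 = (1-a)\<^sup>2" by (simp add: Q_def power2_eq_square algebra_simps)
    then show ?thesis by (simp add: g_def')
  qed
  have gpi: "g pi = 1+a"
  proof -
    have "Q pi = (1+a)\<^sup>2" by (simp add: Q_def power2_eq_square algebra_simps)
    then show ?thesis using a by (simp add: g_def')
  qed
  have mid: "\<bar>1-a\<bar> < g \<beta> \<and> g \<beta> < 1+a" if "0 < \<beta>" "\<beta> < pi" for \<beta>
  proof -
    have c1: "cos \<beta> < 1"
    proof -
      have "cos \<beta> < cos 0" using that by (intro cos_monotone_0_pi) auto
      then show ?thesis by simp
    qed
    have c2: "cos \<beta> > -1"
    proof -
      have "cos \<beta> > cos pi" using that by (intro cos_monotone_0_pi) auto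
      then show ?thesis by simp
    qed
    have "\<bar>1-a\<bar> < sqrt (Q \<beta>)" unfolding Q_def
      by (rule real_less_rsqrt) (use Q_bounds(3)[OF a(1) c1] in simp)
    moreover have "sqrt (Q \<beta>) < 1+a" unfolding Q_def
      by (rule real_less_lsqrt) (use Q_bounds(4)[OF a(1) c2] a in simp_all)
    ultimately show ?thesis using a by (simp add: g_def')
  qed
  have deriv: "(g has_real_derivative g' x) (at x)" for x
  proof -
    have d1: "((\<lambda>x. 2 * a * cos x) has_real_derivative 2 * a * (- sin x)) (at x)"
      by (rule DERIV_cmult[OF DERIV_cos])
    have d2: "((\<lambda>x. (1 + a\<^sup>2) - 2 * a * cos x) has_real_derivative 0 - 2 * a * (- sin x)) (at x)"
      by (rule DERIV_diff[OF DERIV_const d1])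
    have dQ: "(Q has_real_derivative 2 * a * sin x) (at x)"
      using d2 unfolding Q_def[abs_def] by simp
    have D: "((\<lambda>x. sqrt (Q x)) has_real_derivative (inverse (sqrt (Q x)) / 2) * (2 * a * sin x)) (at x)"
      by (rule DERIV_chain2[OF DERIV_real_sqrt[OF Qpos] dQ])
    have eqg: "g = (\<lambda>x. sqrt (Q x))" by (rule ext) (rule g_def')
    have bq: "Bf a x = sqrt (Q x)" by (simp add: Bf_def Q_def)
    have sq: "sqrt (Q x) > 0" using Qpos[of x] by simp
    have eqV: "(inverse (sqrt (Q x)) / 2) * (2 * a * sin x) = g' x"
      unfolding g'_def bq using sq by (simp add: field_simps)
    show ?thesis unfolding eqg eqV[symmetric] by (rule D)
  qed
  have cont: "continuous_on {0..pi} g'"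
  proof -
    have cQ: "continuous_on UNIV Q" unfolding Q_def[abs_def] by (intro continuous_intros)
    have cs: "continuous_on UNIV (\<lambda>x. sqrt (Q x))"
      by (rule continuous_on_real_sqrt[OF cQ])
    have "continuous_on UNIV (\<lambda>\<beta>. a * sin \<beta> / sqrt (Q \<beta>))"
      by (rule continuous_on_divide[OF _ cs]) (use Qpos in \<open>auto intro!: continuous_intros simp: Qne\<close>)
    moreover have "g' = (\<lambda>\<beta>. a * sin \<beta> / sqrt (Q \<beta>))"
      by (simp add: fun_eq_iff g'_def g_def[symmetric] g_def')
    ultimately show ?thesis by (auto intro: continuous_on_subset)
  qed
  have g'nn: "0 \<le> g' x" if "x \<in> {0..pi}" for x
    using that a gpos[of x] sin_ge_zero[of x] by (simp add: g'_def g_def)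
  define f where "f y = indicator {\<bar>1-a\<bar><..<1+a} y * H (a, y) * ennreal (1/(a*y))" for y
  have fm[measurable]: "f \<in> borel_measurable borel" unfolding f_def by measurable
  have "(\<integral>\<^sup>+y. f y * indicator {g 0..g pi} y \<partial>lborel) = (\<integral>\<^sup>+\<beta>. f (g \<beta>) * g' \<beta> * indicator {0..pi} \<beta> \<partial>lborel)"
    by (rule nn_integral_substitution_aux[OF fm _ deriv cont g'nn]) auto
  also have "(\<lambda>y. f y * indicator {g 0..g pi} y) = f"
    by (auto simp: fun_eq_iff f_def g0 gpi indicator_def)
  also have "(\<lambda>\<beta>. f (g \<beta>) * g' \<beta> * indicator {0..pi} \<beta>)
      = (\<lambda>\<beta>. indicator {0<..<pi} \<beta> * (H (a, Bf a \<beta>) * ennreal (sin \<beta> / (Bf a \<beta>)\<^sup>2)))"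
  proof
    fix \<beta>
    show "f (g \<beta>) * g' \<beta> * indicator {0..pi} \<beta> = indicator {0<..<pi} \<beta> * (H (a, Bf a \<beta>) * ennreal (sin \<beta> / (Bf a \<beta>)\<^sup>2))"
    proof (cases "0 < \<beta> \<and> \<beta> < pi")
      case True
      have sn: "sin \<beta> \<ge> 0" using True by (intro sin_ge_zero) auto
      have "ennreal (1 / (a * g \<beta>)) * ennreal (g' \<beta>) = ennreal (1 / (a * g \<beta>) * g' \<beta>)"
        using a gpos[of \<beta>] g'nn[of \<beta>] True by (subst ennreal_mult) auto
      also have "1 / (a * g \<beta>) * g' \<beta> = sin \<beta> / (Bf a \<beta>)\<^sup>2"
        using a gpos[of \<beta>] by (simp add: g'_def g_def power2_eq_square field_simps)
      finally have e: "ennreal (1 / (a * g \<beta>)) * ennreal (g' \<beta>) = ennreal (sin \<beta> / (Bf a \<beta>)\<^sup>2)" .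
      show ?thesis using True mid[of \<beta>] e
        by (simp add: f_def g_def indicator_def) (metis mult.commute mult.left_commute)
    next
      case False
      then consider "\<beta> \<notin> {0..pi}" | "\<beta> = 0" | "\<beta> = pi" by fastforce
      then show ?thesis
        by cases (auto simp: f_def g0 gpi indicator_def)
    qed
  qed
  finally show ?thesis by (simp add: f_def)
qed

definition Rset :: "(real \<times> real) set" where
  "Rset = {(a,b). 0 < a \<and> 0 < b \<and> \<bar>a-b\<bar> < 1 \<and> 1 < a+b}"

lemma Rset_open: "open Rset"
proof -
  have "Rset = {x. 0 < fst x \<and> 0 < snd x \<and> \<bar>fst x - snd x\<bar> < 1 \<and> 1 < fst x + snd x}"
    by (auto simp: Rset_def)
  also have "open \<dots>"
    by (intro open_Collect_conj open_Collect_less continuous_intros)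
  finally show ?thesis .
qed

lemma Rset_sets[measurable]: "Rset \<in> sets borel"
  using Rset_open by (rule borel_open)

lemma Rset_sets2[measurable]: "Rset \<in> sets (borel \<Otimes>\<^sub>M borel)"
  by (subst borel_prod) (rule Rset_sets)

lemma Rset_iff: "0 < a \<Longrightarrow> (a,b) \<in> Rset \<longleftrightarrow> b \<in> {\<bar>1-a\<bar><..<1+a}"
  unfolding Rset_def by auto

lemma joint:
  fixes H :: "real \<times> real \<Rightarrow> ennreal"
  assumes Hm[measurable]: "H \<in> borel_measurable borel"
  shows "(\<integral>\<^sup>+\<beta>. indicator {0<..<pi} \<beta> * (\<integral>\<^sup>+\<alpha>. indicator {0<..<pi-\<beta>} \<alpha> * H (sin \<alpha> / sin (\<alpha>+\<beta>), sin \<beta> / sin (\<alpha>+\<beta>)) \<partial>lborel) \<partial>lborel)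
       = (\<integral>\<^sup>+a. \<integral>\<^sup>+b. indicator Rset (a,b) * H (a,b) * ennreal (1/(a*b)) \<partial>lborel \<partial>lborel)"
proof -
  define K where "K x \<beta> = indicator {0<..<pi} \<beta> * (indicator {0<..} x * H (x, Bf x \<beta>) * ennreal (sin \<beta> / (Bf x \<beta>)\<^sup>2))" for x \<beta>
  have Km: "case_prod K \<in> borel_measurable (lborel \<Otimes>\<^sub>M lborel)"
    unfolding K_def Bf_def by measurable
  have "(\<integral>\<^sup>+\<beta>. indicator {0<..<pi} \<beta> * (\<integral>\<^sup>+\<alpha>. indicator {0<..<pi-\<beta>} \<alpha> * H (sin \<alpha> / sin (\<alpha>+\<beta>), sin \<beta> / sin (\<alpha>+\<beta>)) \<partial>lborel) \<partial>lborel)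
      = (\<integral>\<^sup>+\<beta>. indicator {0<..<pi} \<beta> * (\<integral>\<^sup>+x. indicator {0<..} x * H (x, Bf x \<beta>) * ennreal (sin \<beta> / (Bf x \<beta>)\<^sup>2) \<partial>lborel) \<partial>lborel)"
  proof (intro nn_integral_cong)
    fix \<beta> :: real
    show "indicator {0<..<pi} \<beta> * (\<integral>\<^sup>+\<alpha>. indicator {0<..<pi-\<beta>} \<alpha> * H (sin \<alpha> / sin (\<alpha>+\<beta>), sin \<beta> / sin (\<alpha>+\<beta>)) \<partial>lborel)
      = indicator {0<..<pi} \<beta> * (\<integral>\<^sup>+x. indicator {0<..} x * H (x, Bf x \<beta>) * ennreal (sin \<beta> / (Bf x \<beta>)\<^sup>2) \<partial>lborel)"
    proof (cases "0 < \<beta> \<and> \<beta> < pi")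
      case True
      then show ?thesis using sub1[OF Hm, of \<beta>] by simp
    next
      case False
      then show ?thesis by (auto simp: indicator_def)
    qed
  qed
  also have "\<dots> = (\<integral>\<^sup>+\<beta>. \<integral>\<^sup>+x. K x \<beta> \<partial>lborel \<partial>lborel)"
    unfolding K_def
    by (intro nn_integral_cong nn_integral_cmult[symmetric]) (unfold Bf_def, measurable)
  also have "\<dots> = (\<integral>\<^sup>+x. \<integral>\<^sup>+\<beta>. K x \<beta> \<partial>lborel \<partial>lborel)"
    by (rule lborel_pair.Fubini'[OF Km])
  also have "\<dots> = (\<integral>\<^sup>+x. indicator {0<..} x * (\<integral>\<^sup>+\<beta>. indicator {0<..<pi} \<beta> * (H (x, Bf x \<beta>) * ennreal (sin \<beta> / (Bf x \<beta>)\<^sup>2)) \<partial>lborel) \<partial>lborel)"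
  proof (intro nn_integral_cong)
    fix x :: real
    have "(\<integral>\<^sup>+\<beta>. K x \<beta> \<partial>lborel) = (\<integral>\<^sup>+\<beta>. indicator {0<..} x * (indicator {0<..<pi} \<beta> * (H (x, Bf x \<beta>) * ennreal (sin \<beta> / (Bf x \<beta>)\<^sup>2))) \<partial>lborel)"
      unfolding K_def by (intro nn_integral_cong) (simp add: mult_ac)
    also have "\<dots> = indicator {0<..} x * (\<integral>\<^sup>+\<beta>. indicator {0<..<pi} \<beta> * (H (x, Bf x \<beta>) * ennreal (sin \<beta> / (Bf x \<beta>)\<^sup>2)) \<partial>lborel)"
      by (rule nn_integral_cmult) (unfold Bf_def, measurable)
    finally show "(\<integral>\<^sup>+\<beta>. K x \<beta> \<partial>lborel) = indicator {0<..} x * (\<integral>\<^sup>+\<beta>. indicator {0<..<pi} \<beta> * (H (x, Bf x \<beta>) * ennreal (sin \<beta> / (Bf x \<beta>)\<^sup>2)) \<partial>lborel)" .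
  qed
  also have "\<dots> = (\<integral>\<^sup>+x. indicator {0<..} x * (\<integral>\<^sup>+y. indicator {\<bar>1-x\<bar><..<1+x} y * H (x, y) * ennreal (1/(x*y)) \<partial>lborel) \<partial>lborel)"
  proof (intro nn_integral_cong_AE)
    show "AE x in lborel. indicator {0<..} x * (\<integral>\<^sup>+\<beta>. indicator {0<..<pi} \<beta> * (H (x, Bf x \<beta>) * ennreal (sin \<beta> / (Bf x \<beta>)\<^sup>2)) \<partial>lborel)
        = indicator {0<..} x * (\<integral>\<^sup>+y. indicator {\<bar>1-x\<bar><..<1+x} y * H (x, y) * ennreal (1/(x*y)) \<partial>lborel)"
      using AE_lborel_singleton[of 1]
    proof eventually_elim
      case (elim x)
      then show ?case
      proof (cases "0 < x")
        case True
        then show ?thesis using sub2[OF Hm True elim] by simp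
      qed (simp add: indicator_def)
    qed
  qed
  also have "\<dots> = (\<integral>\<^sup>+a. \<integral>\<^sup>+b. indicator Rset (a,b) * H (a,b) * ennreal (1/(a*b)) \<partial>lborel \<partial>lborel)"
  proof (intro nn_integral_cong)
    fix x :: real
    have "indicator {0<..} x * (\<integral>\<^sup>+y. indicator {\<bar>1-x\<bar><..<1+x} y * H (x, y) * ennreal (1/(x*y)) \<partial>lborel)
        = (\<integral>\<^sup>+y. indicator {0<..} x * (indicator {\<bar>1-x\<bar><..<1+x} y * H (x, y) * ennreal (1/(x*y))) \<partial>lborel)"
      by (rule nn_integral_cmult[symmetric]) measurable
    also have "\<dots> = (\<integral>\<^sup>+y. indicator Rset (x,y) * H (x,y) * ennreal (1/(x*y)) \<partial>lborel)"
    proof (intro nn_integral_cong)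
      fix y :: real
      show "indicator {0<..} x * (indicator {\<bar>1-x\<bar><..<1+x} y * H (x, y) * ennreal (1/(x*y)))
          = indicator Rset (x,y) * H (x,y) * ennreal (1/(x*y))"
      proof (cases "0 < x")
        case True
        then show ?thesis using Rset_iff[OF True, of y] by (simp add: indicator_def)
      next
        case False
        then have "(x,y) \<notin> Rset" by (auto simp: Rset_def)
        then show ?thesis using False by (simp add: indicator_def)
      qed
    qed
    finally show "indicator {0<..} x * (\<integral>\<^sup>+y. indicator {\<bar>1-x\<bar><..<1+x} y * H (x, y) * ennreal (1/(x*y)) \<partial>lborel)
        = (\<integral>\<^sup>+y. indicator Rset (x,y) * H (x,y) * ennreal (1/(x*y)) \<partial>lborel)" .
  qed
  finally show ?thesis .
qed

definition Jint :: "(real \<times> real \<Rightarrow> ennreal) \<Rightarrow> ennreal" where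
  "Jint H = (\<integral>\<^sup>+a. \<integral>\<^sup>+b. indicator Rset (a,b) * H (a,b) * ennreal (1/(a*b)) \<partial>lborel \<partial>lborel)"

lemma Rset_swap: "(a,b) \<in> Rset \<longleftrightarrow> (b,a) \<in> Rset"
  unfolding Rset_def by auto

lemma Jint_swap:
  assumes [measurable]: "H \<in> borel_measurable borel"
  shows "Jint H = Jint (\<lambda>z. H (snd z, fst z))"
proof -
  have "Jint H = (\<integral>\<^sup>+b. \<integral>\<^sup>+a. indicator Rset (a,b) * H (a,b) * ennreal (1/(a*b)) \<partial>lborel \<partial>lborel)"
    unfolding Jint_def by (rule lborel_pair.Fubini'[symmetric]) measurable
  also have "\<dots> = (\<integral>\<^sup>+b. \<integral>\<^sup>+a. indicator Rset (b,a) * H (a,b) * ennreal (1/(b*a)) \<partial>lborel \<partial>lborel)"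
    by (intro nn_integral_cong) (simp add: indicator_def Rset_swap mult.commute)
  also have "\<dots> = Jint (\<lambda>z. H (snd z, fst z))"
    unfolding Jint_def by simp
  finally show ?thesis .
qed

lemma Jint_add:
  assumes [measurable]: "H1 \<in> borel_measurable borel" "H2 \<in> borel_measurable borel"
  shows "Jint (\<lambda>z. H1 z + H2 z) = Jint H1 + Jint H2"
proof -
  have "Jint (\<lambda>z. H1 z + H2 z) = (\<integral>\<^sup>+a. (\<integral>\<^sup>+b. indicator Rset (a,b) * H1 (a,b) * ennreal (1/(a*b)) \<partial>lborel)
       + (\<integral>\<^sup>+b. indicator Rset (a,b) * H2 (a,b) * ennreal (1/(a*b)) \<partial>lborel) \<partial>lborel)"
    unfolding Jint_def
    by (intro nn_integral_cong, subst nn_integral_add[symmetric]) (auto simp: distrib_left distrib_right)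
  also have "\<dots> = Jint H1 + Jint H2"
    unfolding Jint_def by (rule nn_integral_add) measurable
  finally show ?thesis .
qed

lemma Jint_cong:
  assumes "\<And>a b. (a,b) \<in> Rset \<Longrightarrow> H1 (a,b) = H2 (a,b)"
  shows "Jint H1 = Jint H2"
  unfolding Jint_def
  by (intro nn_integral_cong) (auto simp: indicator_def assms)

lemma Jint_diag:
  assumes [measurable]: "h \<in> borel_measurable borel"
  shows "Jint (\<lambda>z. of_bool (snd z \<le> fst z) * h (fst z)) = Jint (\<lambda>z. of_bool (snd z < fst z) * h (fst z))"
  unfolding Jint_def
  apply (rule nn_integral_cong)
  subgoal for a
    apply (rule nn_integral_cong_AE)
    using AE_lborel_singleton[of a] by eventually_elim auto
  done

lemma intlog:
  fixes p q c :: real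
  assumes "0 < p" "p < q" "0 < c"
  shows "(\<integral>\<^sup>+b. indicator {p<..<q} b * ennreal (1/(c*b)) \<partial>lborel) = ennreal ((ln q - ln p)/c)"
proof -
  have "(\<integral>\<^sup>+b. indicator {p<..<q} b * ennreal (1/(c*b)) \<partial>lborel) = (\<integral>\<^sup>+b. ennreal (1/(c*b)) * indicator {p..q} b \<partial>lborel)"
  proof (intro nn_integral_cong_AE)
    show "AE b in lborel. indicator {p<..<q} b * ennreal (1/(c*b)) = ennreal (1/(c*b)) * indicator {p..q} b"
      using AE_lborel_singleton[of p] AE_lborel_singleton[of q]
      by eventually_elim (auto simp: indicator_def)
  qed
  also have "\<dots> = ennreal (ln q / c - ln p / c)"
  proof (rule nn_integral_FTC_Icc)
    show "(\<lambda>b. 1/(c*b)) \<in> borel_measurable borel" by measurable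
    show "((\<lambda>b. ln b / c) has_real_derivative 1/(c*b)) (at b)" if "b \<in> {p..q}" for b
    proof -
      have "b > 0" using that assms by auto
      then have "((\<lambda>b. ln b / c) has_real_derivative (1/b) / c) (at b)"
        by (intro DERIV_cdivide DERIV_ln_divide)
      then show ?thesis by (simp add: field_simps)
    qed
    show "0 \<le> 1/(c*b)" if "b \<in> {p..q}" for b using that assms by auto
    show "p \<le> q" using assms by simp
  qed
  also have "ln q / c - ln p / c = (ln q - ln p)/c" by (simp add: diff_divide_distrib)
  finally show ?thesis .
qed

definition mx :: "real \<Rightarrow> real" where
  "mx a = (if a > 1/2 then (ln a - ln \<bar>1-a\<bar>)/a else 0)"

definition mn :: "real \<Rightarrow> real" where
  "mn y = (if 0 < y \<and> y < 1/2 then (ln (1+y) - ln (1-y))/y else if y > 1/2 then (ln (1+y) - ln y)/y else 0)"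

lemma inner_max:
  fixes h :: "real \<Rightarrow> ennreal"
  assumes "0 < a" "a \<noteq> 1"
  shows "(\<integral>\<^sup>+b. indicator Rset (a,b) * (of_bool (b < a) * h a) * ennreal (1/(a*b)) \<partial>lborel) = h a * ennreal (mx a)"
proof (cases "a > 1/2")
  case True
  have "(\<integral>\<^sup>+b. indicator Rset (a,b) * (of_bool (b < a) * h a) * ennreal (1/(a*b)) \<partial>lborel)
      = (\<integral>\<^sup>+b. h a * (indicator {\<bar>1-a\<bar><..<a} b * ennreal (1/(a*b))) \<partial>lborel)"
    by (intro nn_integral_cong) (auto simp: indicator_def Rset_iff[OF assms(1)])
  also have "\<dots> = h a * (\<integral>\<^sup>+b. indicator {\<bar>1-a\<bar><..<a} b * ennreal (1/(a*b)) \<partial>lborel)"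
    by (rule nn_integral_cmult) measurable
  also have "(\<integral>\<^sup>+b. indicator {\<bar>1-a\<bar><..<a} b * ennreal (1/(a*b)) \<partial>lborel) = ennreal ((ln a - ln \<bar>1-a\<bar>)/a)"
    by (rule intlog) (use assms True in auto)
  finally show ?thesis using True by (simp add: mx_def)
next
  case False
  have nz: "(a,b) \<in> Rset \<Longrightarrow> b < a \<Longrightarrow> False" for b
    using Rset_iff[OF assms(1), of b] False by (auto split: abs_split)
  have z: "(\<lambda>b. indicator Rset (a,b) * (of_bool (b < a) * h a) * ennreal (1/(a*b))) = (\<lambda>b. 0)"
    using nz by (auto simp: fun_eq_iff indicator_def)
  show ?thesis using False by (simp add: z mx_def)
qed

lemma inner_min:
  fixes h :: "real \<Rightarrow> ennreal"
  assumes "0 < b" "b \<noteq> 1/2"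
  shows "(\<integral>\<^sup>+a. indicator Rset (a,b) * (of_bool (b < a) * h b) * ennreal (1/(a*b)) \<partial>lborel) = h b * ennreal (mn b)"
proof -
  define m where "m = (if b < 1/2 then 1 - b else b)"
  have m: "0 < m" "m < 1 + b" using assms by (auto simp: m_def)
  have sec: "(a,b) \<in> Rset \<and> b < a \<longleftrightarrow> a \<in> {m<..<1+b}" for a
    using Rset_iff[OF assms(1), of a] Rset_swap[of a b] assms by (auto simp: m_def)
  have "(\<integral>\<^sup>+a. indicator Rset (a,b) * (of_bool (b < a) * h b) * ennreal (1/(a*b)) \<partial>lborel)
      = (\<integral>\<^sup>+a. h b * (indicator {m<..<1+b} a * ennreal (1/(b*a))) \<partial>lborel)"
  proof (intro nn_integral_cong)
    fix a :: real
    show "indicator Rset (a,b) * (of_bool (b < a) * h b) * ennreal (1/(a*b)) = h b * (indicator {m<..<1+b} a * ennreal (1/(b*a)))"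
    proof (cases "(a,b) \<in> Rset \<and> b < a")
      case True
      then have "a \<in> {m<..<1+b}" using sec by blast
      then show ?thesis using True by (simp add: indicator_def mult.commute)
    next
      case False
      then have "a \<notin> {m<..<1+b}" using sec by blast
      then show ?thesis using False by (auto simp: indicator_def)
    qed
  qed
  also have "\<dots> = h b * (\<integral>\<^sup>+a. indicator {m<..<1+b} a * ennreal (1/(b*a)) \<partial>lborel)"
    by (rule nn_integral_cmult) measurable
  also have "(\<integral>\<^sup>+a. indicator {m<..<1+b} a * ennreal (1/(b*a)) \<partial>lborel) = ennreal ((ln (1+b) - ln m)/b)"
    by (rule intlog) (use assms m in auto)
  also have "(ln (1+b) - ln m)/b = mn b"
    using assms by (auto simp: mn_def m_def)
  finally show ?thesis .
qed

lemma meas_fst: assumes "h \<in> borel_measurable borel" shows "(\<lambda>z::real\<times>real. h (fst z)) \<in> borel_measurable borel"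
  by (subst borel_prod[symmetric]) (rule measurable_compose[OF measurable_fst assms])

lemma meas_snd: assumes "h \<in> borel_measurable borel" shows "(\<lambda>z::real\<times>real. h (snd z)) \<in> borel_measurable borel"
  by (subst borel_prod[symmetric]) (rule measurable_compose[OF measurable_snd assms])

lemma Jint_diag':
  assumes [measurable]: "G \<in> borel_measurable borel"
  shows "Jint (\<lambda>z. of_bool (snd z \<le> fst z) * G z) = Jint (\<lambda>z. of_bool (snd z < fst z) * G z)"
  unfolding Jint_def
  apply (rule nn_integral_cong)
  subgoal for a
    apply (rule nn_integral_cong_AE)
    using AE_lborel_singleton[of a] by eventually_elim auto
  done

lemma J_max:
  fixes h :: "real \<Rightarrow> ennreal"
  assumes hm[measurable]: "h \<in> borel_measurable borel"
  shows "Jint (\<lambda>z. h (max (fst z) (snd z))) = 2 * (\<integral>\<^sup>+a. h a * ennreal (mx a) \<partial>lborel)"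
proof -
  define A where "A z = of_bool (snd z < fst z) * h (fst z)" for z :: "real \<times> real"
  define B where "B z = of_bool (fst z \<le> snd z) * h (snd z)" for z :: "real \<times> real"
  have Am[measurable]: "A \<in> borel_measurable borel" unfolding A_def by (subst borel_prod[symmetric]) measurable
  have Bm[measurable]: "B \<in> borel_measurable borel" unfolding B_def by (subst borel_prod[symmetric]) measurable
  have "Jint (\<lambda>z. h (max (fst z) (snd z))) = Jint (\<lambda>z. A z + B z)"
    by (rule Jint_cong) (auto simp: A_def B_def max_def)
  also have "\<dots> = Jint A + Jint B" by (rule Jint_add) measurable
  also have "Jint B = Jint (\<lambda>z. B (snd z, fst z))" by (rule Jint_swap) measurable
  also have "(\<lambda>z. B (snd z, fst z)) = (\<lambda>z. of_bool (snd z \<le> fst z) * h (fst z))"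
    by (simp add: B_def)
  also have "Jint \<dots> = Jint A"
    unfolding A_def by (rule Jint_diag') (rule meas_fst[OF hm])
  also have "Jint A = (\<integral>\<^sup>+a. h a * ennreal (mx a) \<partial>lborel)"
    unfolding Jint_def
  proof (rule nn_integral_cong_AE)
    show "AE a in lborel. (\<integral>\<^sup>+b. indicator Rset (a,b) * A (a,b) * ennreal (1/(a*b)) \<partial>lborel) = h a * ennreal (mx a)"
      using AE_lborel_singleton[of 1]
    proof eventually_elim
      case (elim a)
      show ?case
      proof (cases "0 < a")
        case True
        then show ?thesis using inner_max[OF True elim, of h] by (simp add: A_def)
      next
        case False
        then have "(a,b) \<notin> Rset" for b by (auto simp: Rset_def)
        then show ?thesis using False by (simp add: mx_def)
      qed
    qed
  qed
  finally show ?thesis by (simp add: mult_2)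
qed

lemma J_min:
  fixes h :: "real \<Rightarrow> ennreal"
  assumes hm[measurable]: "h \<in> borel_measurable borel"
  shows "Jint (\<lambda>z. h (min (fst z) (snd z))) = 2 * (\<integral>\<^sup>+b. h b * ennreal (mn b) \<partial>lborel)"
proof -
  define A where "A z = of_bool (snd z < fst z) * h (snd z)" for z :: "real \<times> real"
  define B where "B z = of_bool (fst z \<le> snd z) * h (fst z)" for z :: "real \<times> real"
  have Am[measurable]: "A \<in> borel_measurable borel" unfolding A_def by (subst borel_prod[symmetric]) measurable
  have Bm[measurable]: "B \<in> borel_measurable borel" unfolding B_def by (subst borel_prod[symmetric]) measurable
  have "Jint (\<lambda>z. h (min (fst z) (snd z))) = Jint (\<lambda>z. A z + B z)"
    by (rule Jint_cong) (auto simp: A_def B_def min_def)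
  also have "\<dots> = Jint A + Jint B" by (rule Jint_add) measurable
  also have "Jint B = Jint (\<lambda>z. B (snd z, fst z))" by (rule Jint_swap) measurable
  also have "(\<lambda>z. B (snd z, fst z)) = (\<lambda>z. of_bool (snd z \<le> fst z) * h (snd z))"
    by (simp add: B_def)
  also have "Jint \<dots> = Jint A"
    unfolding A_def by (rule Jint_diag') (rule meas_snd[OF hm])
  also have "Jint A = (\<integral>\<^sup>+b. \<integral>\<^sup>+a. indicator Rset (a,b) * A (a,b) * ennreal (1/(a*b)) \<partial>lborel \<partial>lborel)"
    unfolding Jint_def by (rule lborel_pair.Fubini'[symmetric]) measurable
  also have "\<dots> = (\<integral>\<^sup>+b. h b * ennreal (mn b) \<partial>lborel)"
  proof (rule nn_integral_cong_AE)
    show "AE b in lborel. (\<integral>\<^sup>+a. indicator Rset (a,b) * A (a,b) * ennreal (1/(a*b)) \<partial>lborel) = h b * ennreal (mn b)"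
      using AE_lborel_singleton[of "1/2"]
    proof eventually_elim
      case (elim b)
      show ?case
      proof (cases "0 < b")
        case True
        then show ?thesis using inner_min[OF True elim, of h] by (simp add: A_def)
      next
        case False
        then have "(a,b) \<notin> Rset" for a by (auto simp: Rset_def)
        then show ?thesis using False by (simp add: mn_def)
      qed
    qed
  qed
  finally show ?thesis by (simp add: mult_2)
qed

definition IT :: "(real \<times> real \<Rightarrow> ennreal) \<Rightarrow> ennreal" where
  "IT Q = (\<integral>\<^sup>+\<beta>. indicator {0<..<pi} \<beta> * (\<integral>\<^sup>+\<alpha>. indicator {0<..<pi-\<beta>} \<alpha> * Q (\<alpha>, \<beta>) \<partial>lborel) \<partial>lborel)"

lemma reflect_pi:
  fixes f :: "real \<Rightarrow> ennreal"
  assumes "f \<in> borel_measurable borel"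
  shows "(\<integral>\<^sup>+x. f x \<partial>lborel) = (\<integral>\<^sup>+x. f (pi - x) \<partial>lborel)"
  using nn_integral_real_affine[OF assms, of "-1" pi] by simp

lemma IT_alt:
  fixes Q :: "real \<times> real \<Rightarrow> ennreal"
  assumes Qm[measurable]: "Q \<in> borel_measurable borel"
    and C: "\<And>\<alpha> \<beta>. \<beta> \<noteq> 0 \<Longrightarrow> \<alpha> \<noteq> 0 \<Longrightarrow> \<alpha> \<noteq> pi - \<beta> \<Longrightarrow> C \<alpha> \<beta> \<longleftrightarrow> (0 < \<beta> \<and> \<beta> < pi \<and> 0 < \<alpha> \<and> \<alpha> < pi - \<beta>)"
  shows "(\<integral>\<^sup>+\<beta>. \<integral>\<^sup>+\<alpha>. of_bool (C \<alpha> \<beta>) * Q (\<alpha>, \<beta>) \<partial>lborel \<partial>lborel) = IT Q"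
  unfolding IT_def
proof (rule nn_integral_cong_AE)
  show "AE \<beta> in lborel. (\<integral>\<^sup>+\<alpha>. of_bool (C \<alpha> \<beta>) * Q (\<alpha>, \<beta>) \<partial>lborel)
      = indicator {0<..<pi} \<beta> * (\<integral>\<^sup>+\<alpha>. indicator {0<..<pi-\<beta>} \<alpha> * Q (\<alpha>, \<beta>) \<partial>lborel)"
    using AE_lborel_singleton[of 0]
  proof eventually_elim
    case (elim \<beta>)
    have "(\<integral>\<^sup>+\<alpha>. of_bool (C \<alpha> \<beta>) * Q (\<alpha>, \<beta>) \<partial>lborel)
        = (\<integral>\<^sup>+\<alpha>. indicator {0<..<pi} \<beta> * (indicator {0<..<pi-\<beta>} \<alpha> * Q (\<alpha>, \<beta>)) \<partial>lborel)"
    proof (rule nn_integral_cong_AE)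
      show "AE \<alpha> in lborel. of_bool (C \<alpha> \<beta>) * Q (\<alpha>, \<beta>) = indicator {0<..<pi} \<beta> * (indicator {0<..<pi-\<beta>} \<alpha> * Q (\<alpha>, \<beta>))"
        using AE_lborel_singleton[of 0] AE_lborel_singleton[of "pi - \<beta>"]
        by eventually_elim (use C elim in \<open>auto simp: indicator_def\<close>)
    qed
    also have "\<dots> = indicator {0<..<pi} \<beta> * (\<integral>\<^sup>+\<alpha>. indicator {0<..<pi-\<beta>} \<alpha> * Q (\<alpha>, \<beta>) \<partial>lborel)"
      by (rule nn_integral_cmult) measurable
    finally show ?case .
  qed
qed

lemma fold:
  fixes Q :: "real \<times> real \<Rightarrow> ennreal"
  assumes Qm[measurable]: "Q \<in> borel_measurable borel"
  shows "(\<integral>\<^sup>+\<phi>. \<integral>\<^sup>+\<psi>. indicator {0..pi} \<phi> * indicator {0..pi} \<psi> * Q (angles \<phi> \<psi>) \<partial>lborel \<partial>lborel) = 2 * IT Q"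
proof -
  define S1 where "S1 \<phi> \<psi> = of_bool (0 \<le> \<phi> \<and> 0 \<le> \<psi> \<and> \<phi> + \<psi> < pi) * Q (\<phi>, \<psi>)" for \<phi> \<psi> :: real
  define S2 where "S2 \<phi> \<psi> = of_bool (\<phi> \<le> pi \<and> \<psi> \<le> pi \<and> pi \<le> \<phi> + \<psi>) * Q (pi - \<psi>, pi - \<phi>)" for \<phi> \<psi> :: real
  have S1m: "case_prod S1 \<in> borel_measurable (lborel \<Otimes>\<^sub>M lborel)" unfolding S1_def by measurable
  have S2m: "case_prod S2 \<in> borel_measurable (lborel \<Otimes>\<^sub>M lborel)" unfolding S2_def by measurable
  have pw: "indicator {0..pi} \<phi> * indicator {0..pi} \<psi> * Q (angles \<phi> \<psi>) = S1 \<phi> \<psi> + S2 \<phi> \<psi>" for \<phi> \<psi> :: real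
    by (auto simp: S1_def S2_def angles_def indicator_def)
  have "(\<integral>\<^sup>+\<phi>. \<integral>\<^sup>+\<psi>. indicator {0..pi} \<phi> * indicator {0..pi} \<psi> * Q (angles \<phi> \<psi>) \<partial>lborel \<partial>lborel)
      = (\<integral>\<^sup>+\<phi>. (\<integral>\<^sup>+\<psi>. S1 \<phi> \<psi> \<partial>lborel) + (\<integral>\<^sup>+\<psi>. S2 \<phi> \<psi> \<partial>lborel) \<partial>lborel)"
    unfolding pw by (intro nn_integral_cong nn_integral_add) (unfold S1_def S2_def, measurable)
  also have "\<dots> = (\<integral>\<^sup>+\<phi>. \<integral>\<^sup>+\<psi>. S1 \<phi> \<psi> \<partial>lborel \<partial>lborel) + (\<integral>\<^sup>+\<phi>. \<integral>\<^sup>+\<psi>. S2 \<phi> \<psi> \<partial>lborel \<partial>lborel)"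
    by (rule nn_integral_add) (use S1m S2m in measurable)
  also have "(\<integral>\<^sup>+\<phi>. \<integral>\<^sup>+\<psi>. S1 \<phi> \<psi> \<partial>lborel \<partial>lborel) = IT Q"
  proof -
    have "(\<integral>\<^sup>+\<phi>. \<integral>\<^sup>+\<psi>. S1 \<phi> \<psi> \<partial>lborel \<partial>lborel) = (\<integral>\<^sup>+\<psi>. \<integral>\<^sup>+\<phi>. S1 \<phi> \<psi> \<partial>lborel \<partial>lborel)"
      by (rule lborel_pair.Fubini'[symmetric, OF S1m])
    also have "\<dots> = IT Q"
      unfolding S1_def by (rule IT_alt[OF Qm]) auto
    finally show ?thesis .
  qed
  also have "(\<integral>\<^sup>+\<phi>. \<integral>\<^sup>+\<psi>. S2 \<phi> \<psi> \<partial>lborel \<partial>lborel) = IT Q"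
  proof -
    have "(\<integral>\<^sup>+\<phi>. \<integral>\<^sup>+\<psi>. S2 \<phi> \<psi> \<partial>lborel \<partial>lborel) = (\<integral>\<^sup>+\<phi>. \<integral>\<^sup>+\<alpha>. S2 \<phi> (pi - \<alpha>) \<partial>lborel \<partial>lborel)"
      by (intro nn_integral_cong reflect_pi) (unfold S2_def, measurable)
    also have "\<dots> = (\<integral>\<^sup>+\<beta>. \<integral>\<^sup>+\<alpha>. S2 (pi - \<beta>) (pi - \<alpha>) \<partial>lborel \<partial>lborel)"
      by (rule reflect_pi) (unfold S2_def, measurable)
    also have "\<dots> = (\<integral>\<^sup>+\<beta>. \<integral>\<^sup>+\<alpha>. of_bool (0 \<le> \<beta> \<and> 0 \<le> \<alpha> \<and> \<alpha> + \<beta> \<le> pi) * Q (\<alpha>, \<beta>) \<partial>lborel \<partial>lborel)"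
      by (intro nn_integral_cong) (auto simp: S2_def)
    also have "\<dots> = IT Q"
      by (rule IT_alt[OF Qm]) auto
    finally show ?thesis .
  qed
  finally show ?thesis by (simp add: mult_2)
qed

definition sAx :: "real \<Rightarrow> real \<Rightarrow> real" where
  "sAx a b = sqrt ((1 - tan b / (tan a + tan b))\<^sup>2 + (tan a * tan b / (tan a + tan b))\<^sup>2)"
definition sBx :: "real \<Rightarrow> real \<Rightarrow> real" where
  "sBx a b = sqrt ((tan b / (tan a + tan b))\<^sup>2 + (tan a * tan b / (tan a + tan b))\<^sup>2)"

lemma normA: "norm ((1,0) - vertexC a b) = sAx a b"
proof -
  have "(1::real,0::real) - vertexC a b = (1 - tan b / (tan a + tan b), - (tan a * tan b / (tan a + tan b)))"
    by (simp add: vertexC_def)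
  then show ?thesis by (simp only: norm_Pair real_norm_def power2_abs power2_minus sAx_def)
qed

lemma normB: "norm ((0,0) - vertexC a b) = sBx a b"
proof -
  have "(0::real,0::real) - vertexC a b = (- (tan b / (tan a + tan b)), - (tan a * tan b / (tan a + tan b)))"
    by (simp add: vertexC_def)
  then show ?thesis by (simp only: norm_Pair real_norm_def power2_abs power2_minus sBx_def)
qed

lemma side_a_alt: "side_a \<phi> \<psi> = (if \<phi> + \<psi> < pi then sAx \<phi> \<psi> else sAx (pi - \<psi>) (pi - \<phi>))"
  by (simp add: side_a_def angles_def normA)

lemma side_b_alt: "side_b \<phi> \<psi> = (if \<phi> + \<psi> < pi then sBx \<phi> \<psi> else sBx (pi - \<psi>) (pi - \<phi>))"
  by (simp add: side_b_def angles_def normB)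

lemma sAx_meas[measurable]: "(\<lambda>z. sAx (f z) (g z)) \<in> borel_measurable M"
  if [measurable]: "f \<in> borel_measurable M" "g \<in> borel_measurable M"
  unfolding sAx_def tan_def by measurable

lemma sBx_meas[measurable]: "(\<lambda>z. sBx (f z) (g z)) \<in> borel_measurable M"
  if [measurable]: "f \<in> borel_measurable M" "g \<in> borel_measurable M"
  unfolding sBx_def tan_def by measurable

lemma side_a_meas[measurable]: "(\<lambda>z. side_a (f z) (g z)) \<in> borel_measurable M"
  if [measurable]: "f \<in> borel_measurable M" "g \<in> borel_measurable M"
  unfolding side_a_alt by measurable

lemma side_b_meas[measurable]: "(\<lambda>z. side_b (f z) (g z)) \<in> borel_measurable M"
  if [measurable]: "f \<in> borel_measurable M" "g \<in> borel_measurable M"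
  unfolding side_b_alt by measurable

lemma IT_cong:
  assumes "\<And>\<alpha> \<beta>. 0 < \<beta> \<Longrightarrow> \<beta> < pi \<Longrightarrow> \<beta> \<noteq> pi/2 \<Longrightarrow> 0 < \<alpha> \<Longrightarrow> \<alpha> < pi - \<beta> \<Longrightarrow> \<alpha> \<noteq> pi/2 \<Longrightarrow> Q1 (\<alpha>,\<beta>) = Q2 (\<alpha>,\<beta>)"
  shows "IT Q1 = IT Q2"
  unfolding IT_def
proof (rule nn_integral_cong_AE)
  show "AE \<beta> in lborel. indicator {0<..<pi} \<beta> * (\<integral>\<^sup>+\<alpha>. indicator {0<..<pi-\<beta>} \<alpha> * Q1 (\<alpha>, \<beta>) \<partial>lborel)
      = indicator {0<..<pi} \<beta> * (\<integral>\<^sup>+\<alpha>. indicator {0<..<pi-\<beta>} \<alpha> * Q2 (\<alpha>, \<beta>) \<partial>lborel)"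
    using AE_lborel_singleton[of "pi/2"]
  proof eventually_elim
    case (elim \<beta>)
    have "(\<integral>\<^sup>+\<alpha>. indicator {0<..<pi-\<beta>} \<alpha> * Q1 (\<alpha>, \<beta>) \<partial>lborel) = (\<integral>\<^sup>+\<alpha>. indicator {0<..<pi-\<beta>} \<alpha> * Q2 (\<alpha>, \<beta>) \<partial>lborel)"
      if "0 < \<beta>" "\<beta> < pi"
    proof (rule nn_integral_cong_AE)
      show "AE \<alpha> in lborel. indicator {0<..<pi-\<beta>} \<alpha> * Q1 (\<alpha>, \<beta>) = indicator {0<..<pi-\<beta>} \<alpha> * Q2 (\<alpha>, \<beta>)"
        using AE_lborel_singleton[of "pi/2"]
        by eventually_elim (use assms that elim in \<open>auto simp: indicator_def\<close>)
    qed
    then show ?case by (auto simp: indicator_def)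
  qed
qed

lemma core:
  fixes k :: "real \<times> real \<Rightarrow> ennreal"
  assumes km[measurable]: "k \<in> borel_measurable borel"
  shows "(\<integral>\<^sup>+z. (case z of (x,y) \<Rightarrow> ennreal (indicator {0..pi} x / pi) * ennreal (indicator {0..pi} y / pi))
            * k (side_a (fst z) (snd z), side_b (fst z) (snd z)) \<partial>(lborel \<Otimes>\<^sub>M lborel))
       = ennreal (2/pi\<^sup>2) * Jint k"
proof -
  define Q where "Q p = k (norm ((1,0) - vertexC (fst p) (snd p)), norm ((0,0) - vertexC (fst p) (snd p)))" for p :: "real \<times> real"
  have Qalt: "Q p = k (sAx (fst p) (snd p), sBx (fst p) (snd p))" for p
    by (simp add: Q_def normA normB)
  have Qm[measurable]: "Q \<in> borel_measurable borel"
    unfolding Qalt[abs_def] by (subst borel_prod[symmetric]) measurable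
  have sides: "k (side_a \<phi> \<psi>, side_b \<phi> \<psi>) = Q (angles \<phi> \<psi>)" for \<phi> \<psi>
    by (simp add: Q_def side_a_def side_b_def)
  have pw: "ennreal (indicator {0..pi} x / pi) * ennreal (indicator {0..pi} y / pi)
      = ennreal (1/pi\<^sup>2) * (indicator {0..pi} x * indicator {0..pi} y)" for x y :: real
    by (auto simp: indicator_def ennreal_mult[symmetric] power2_eq_square)
  define F where "F z = (case z of (x,y) \<Rightarrow> ennreal (indicator {0..pi} x / pi) * ennreal (indicator {0..pi} y / pi))
            * k (side_a (fst z) (snd z), side_b (fst z) (snd z))" for z :: "real \<times> real"
  have Fm: "F \<in> borel_measurable (lborel \<Otimes>\<^sub>M lborel)" unfolding F_def by measurable
  have "(\<integral>\<^sup>+z. (case z of (x,y) \<Rightarrow> ennreal (indicator {0..pi} x / pi) * ennreal (indicator {0..pi} y / pi))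
            * k (side_a (fst z) (snd z), side_b (fst z) (snd z)) \<partial>(lborel \<Otimes>\<^sub>M lborel))
      = (\<integral>\<^sup>+\<phi>. \<integral>\<^sup>+\<psi>. F (\<phi>, \<psi>) \<partial>lborel \<partial>lborel)"
    unfolding lborel.nn_integral_fst[OF Fm] by (simp add: F_def[abs_def])
  also have "\<dots> = (\<integral>\<^sup>+\<phi>. \<integral>\<^sup>+\<psi>. ennreal (1/pi\<^sup>2) * (indicator {0..pi} \<phi> * indicator {0..pi} \<psi> * Q (angles \<phi> \<psi>)) \<partial>lborel \<partial>lborel)"
    by (intro nn_integral_cong) (simp only: F_def pw sides split mult.assoc fst_conv snd_conv)
  also have "\<dots> = (\<integral>\<^sup>+\<phi>. ennreal (1/pi\<^sup>2) * (\<integral>\<^sup>+\<psi>. indicator {0..pi} \<phi> * indicator {0..pi} \<psi> * Q (angles \<phi> \<psi>) \<partial>lborel) \<partial>lborel)"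
    by (intro nn_integral_cong nn_integral_cmult) (unfold angles_def, measurable)
  also have "\<dots> = ennreal (1/pi\<^sup>2) * (\<integral>\<^sup>+\<phi>. \<integral>\<^sup>+\<psi>. indicator {0..pi} \<phi> * indicator {0..pi} \<psi> * Q (angles \<phi> \<psi>) \<partial>lborel \<partial>lborel)"
    by (rule nn_integral_cmult) (unfold angles_def, measurable)
  also have "(\<integral>\<^sup>+\<phi>. \<integral>\<^sup>+\<psi>. indicator {0..pi} \<phi> * indicator {0..pi} \<psi> * Q (angles \<phi> \<psi>) \<partial>lborel \<partial>lborel) = 2 * IT Q"
    by (rule fold[OF Qm])
  also have "IT Q = IT (\<lambda>p. k (sin (fst p) / sin (fst p + snd p), sin (snd p) / sin (fst p + snd p)))"
  proof (rule IT_cong)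
    fix \<alpha> \<beta> :: real
    assume h: "0 < \<beta>" "\<beta> < pi" "\<beta> \<noteq> pi/2" "0 < \<alpha>" "\<alpha> < pi - \<beta>" "\<alpha> \<noteq> pi/2"
    have s: "sin (\<alpha>+\<beta>) > 0" using h by (intro sin_gt_zero) auto
    have sa: "sin \<alpha> > 0" using h by (intro sin_gt_zero) auto
    have sb: "sin \<beta> > 0" using h by (intro sin_gt_zero) auto
    have cnz: "cos x \<noteq> 0" if "0 < x" "x < pi" "x \<noteq> pi/2" for x :: real
    proof (cases "x < pi/2")
      case True
      then have "cos x > 0" using that by (intro cos_gt_zero_pi) auto
      then show ?thesis by simp
    next
      case False
      then have "cos x < cos (pi/2)" using that by (intro cos_monotone_0_pi) auto
      then show ?thesis by simp
    qed
    have ca: "cos \<alpha> \<noteq> 0" using h by (intro cnz) auto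
    have cb: "cos \<beta> \<noteq> 0" using h by (intro cnz) auto
    have e1: "norm ((1,0) - vertexC \<alpha> \<beta>) = sin \<alpha> / sin (\<alpha>+\<beta>)"
      using sideA_eq(1)[OF ca cb] s sa by simp
    have e2: "norm ((0,0) - vertexC \<alpha> \<beta>) = sin \<beta> / sin (\<alpha>+\<beta>)"
      using sideA_eq(2)[OF ca cb] s sb by simp
    show "Q (\<alpha>, \<beta>) = k (sin (fst (\<alpha>,\<beta>)) / sin (fst (\<alpha>,\<beta>) + snd (\<alpha>,\<beta>)), sin (snd (\<alpha>,\<beta>)) / sin (fst (\<alpha>,\<beta>) + snd (\<alpha>,\<beta>)))"
      by (simp add: Q_def e1 e2)
  qed
  also have "\<dots> = Jint k"
    unfolding IT_def Jint_def using joint[OF km] by simp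
  also have "ennreal (1/pi\<^sup>2) * (2 * Jint k) = ennreal (2/pi\<^sup>2) * Jint k"
  proof -
    have "ennreal (1/pi\<^sup>2) * ennreal 2 = ennreal (1/pi\<^sup>2 * 2)" by (rule ennreal_mult[symmetric]) auto
    then have "ennreal (1/pi\<^sup>2) * 2 = ennreal (2/pi\<^sup>2)" by simp
    then show ?thesis by (metis mult.assoc)
  qed
  finally show ?thesis .
qed

lemma mx_nonneg: "mx a \<ge> 0"
proof (cases "a > 1/2")
  case True
  show ?thesis
  proof (cases "a = 1")
    case False
    then have "0 < \<bar>1-a\<bar>" "\<bar>1-a\<bar> < a" using True by auto
    then have "ln \<bar>1-a\<bar> < ln a" by (subst ln_less_cancel_iff) auto
    then show ?thesis using True by (simp add: mx_def)
  qed (simp add: mx_def)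
qed (simp add: mx_def)

lemma mn_nonneg: "mn y \<ge> 0"
proof -
  have "ln (1-y) < ln (1+y)" if "0 < y" "y < 1/2" using that by (subst ln_less_cancel_iff) auto
  moreover have "ln y < ln (1+y)" if "y > 1/2" using that by (subst ln_less_cancel_iff) auto
  ultimately show ?thesis by (auto simp: mn_def)
qed

lemma max_density_eq: "max_density x = 4/pi\<^sup>2 * mx x"
  by (simp add: max_density_def mx_def)

lemma min_density_eq: "min_density x = 4/pi\<^sup>2 * mn x"
  by (simp add: min_density_def mn_def)

lemma key_gen:
  fixes h :: "real \<Rightarrow> ennreal" and m :: "real \<Rightarrow> real"
  assumes "\<And>x. m x \<ge> 0" and "J = 2 * (\<integral>\<^sup>+a. h a * ennreal (m a) \<partial>lborel)"
    and [measurable]: "h \<in> borel_measurable borel" "m \<in> borel_measurable borel"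
  shows "ennreal (2/pi\<^sup>2) * J = (\<integral>\<^sup>+x. ennreal (4/pi\<^sup>2 * m x) * h x \<partial>lborel)"
proof -
  have c: "ennreal (2/pi\<^sup>2) * 2 = ennreal (4/pi\<^sup>2)"
  proof -
    have "ennreal (2/pi\<^sup>2) * ennreal 2 = ennreal (2/pi\<^sup>2 * 2)" by (rule ennreal_mult[symmetric]) auto
    then show ?thesis by simp
  qed
  have "ennreal (2/pi\<^sup>2) * J = ennreal (4/pi\<^sup>2) * (\<integral>\<^sup>+a. h a * ennreal (m a) \<partial>lborel)"
    unfolding assms(2) c[symmetric] by (simp add: mult.assoc)
  also have "\<dots> = (\<integral>\<^sup>+a. ennreal (4/pi\<^sup>2) * (h a * ennreal (m a)) \<partial>lborel)"
    by (rule nn_integral_cmult[symmetric]) measurable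
  also have "\<dots> = (\<integral>\<^sup>+x. ennreal (4/pi\<^sup>2 * m x) * h x \<partial>lborel)"
  proof (intro nn_integral_cong)
    fix x :: real
    have "ennreal (4/pi\<^sup>2 * m x) = ennreal (4/pi\<^sup>2) * ennreal (m x)"
      by (intro ennreal_mult) (auto simp: assms(1))
    then show "ennreal (4/pi\<^sup>2) * (h x * ennreal (m x)) = ennreal (4/pi\<^sup>2 * m x) * h x"
      by (simp add: mult_ac)
  qed
  finally show ?thesis .
qed

lemma dist_generic:
  fixes M :: "'s measure" and \<phi> \<psi> :: "'s \<Rightarrow> real" and g :: "real \<times> real \<Rightarrow> real" and f :: "real \<Rightarrow> real"
  assumes J: "distributed M (lborel \<Otimes>\<^sub>M lborel) (\<lambda>x. (\<phi> x, \<psi> x))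
      (\<lambda>(x,y). ennreal (indicator {0..pi} x / pi) * ennreal (indicator {0..pi} y / pi))"
    and gm[measurable]: "g \<in> borel_measurable borel"
    and fm[measurable]: "f \<in> borel_measurable borel"
    and key: "\<And>h. h \<in> borel_measurable borel \<Longrightarrow> ennreal (2/pi\<^sup>2) * Jint (\<lambda>p. h (g p)) = (\<integral>\<^sup>+x. ennreal (f x) * h x \<partial>lborel)"
  shows "distributed M lborel (\<lambda>\<omega>. g (side_a (\<phi> \<omega>) (\<psi> \<omega>), side_b (\<phi> \<omega>) (\<psi> \<omega>))) (\<lambda>x. ennreal (f x))"
proof -
  have Jm[measurable]: "(\<lambda>x. (\<phi> x, \<psi> x)) \<in> measurable M (lborel \<Otimes>\<^sub>M lborel)"
    using J by (rule distributed_measurable)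
  have phim[measurable]: "\<phi> \<in> borel_measurable M"
    using measurable_compose[OF Jm measurable_fst] by (simp add: measurable_lborel2)
  have psim[measurable]: "\<psi> \<in> borel_measurable M"
    using measurable_compose[OF Jm measurable_snd] by (simp add: measurable_lborel2)
  define X where "X \<omega> = g (side_a (\<phi> \<omega>) (\<psi> \<omega>), side_b (\<phi> \<omega>) (\<psi> \<omega>))" for \<omega>
  have Xm[measurable]: "X \<in> measurable M lborel"
    unfolding X_def measurable_lborel2 by measurable
  have "distr M lborel X = density lborel (\<lambda>x. ennreal (f x))"
  proof (rule measure_eqI)
    show "sets (distr M lborel X) = sets (density lborel (\<lambda>x. ennreal (f x)))" by simp
    fix A assume "A \<in> sets (distr M lborel X)"
    then have A[measurable]: "A \<in> sets borel" by simp
    have "emeasure (distr M lborel X) A = (\<integral>\<^sup>+x. indicator A x \<partial>distr M lborel X)"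
      by simp
    also have "\<dots> = (\<integral>\<^sup>+\<omega>. indicator A (X \<omega>) \<partial>M)"
      by (rule nn_integral_distr) measurable
    also have "\<dots> = (\<integral>\<^sup>+z. (\<lambda>(x,y). ennreal (indicator {0..pi} x / pi) * ennreal (indicator {0..pi} y / pi)) z
        * indicator A (g (side_a (fst z) (snd z), side_b (fst z) (snd z))) \<partial>(lborel \<Otimes>\<^sub>M lborel))"
      by (subst distributed_nn_integral[OF J]) (simp_all add: X_def)
    also have "\<dots> = ennreal (2/pi\<^sup>2) * Jint (\<lambda>p. indicator A (g p))"
      by (rule core) measurable
    also have "\<dots> = (\<integral>\<^sup>+x. ennreal (f x) * indicator A x \<partial>lborel)"
      by (rule key) measurable
    also have "\<dots> = emeasure (density lborel (\<lambda>x. ennreal (f x))) A"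
      by (simp add: emeasure_density)
    finally show "emeasure (distr M lborel X) A = emeasure (density lborel (\<lambda>x. ennreal (f x))) A" .
  qed
  then show ?thesis unfolding distributed_def X_def using Xm[unfolded X_def] by simp
qed

theorem mainTheorem19:
  fixes M :: "'s measure" and \<phi> \<psi> :: "'s \<Rightarrow> real"
  assumes "prob_space M"
    and "prob_space.indep_var M borel \<phi> borel \<psi>"
    and "distributed M lborel \<phi> (\<lambda>x. ennreal (indicator {0..pi} x / pi))"
    and "distributed M lborel \<psi> (\<lambda>x. ennreal (indicator {0..pi} x / pi))"
  shows "distributed M lborel (\<lambda>\<omega>. max (side_a (\<phi> \<omega>) (\<psi> \<omega>)) (side_b (\<phi> \<omega>) (\<psi> \<omega>)))
           (\<lambda>x. ennreal (max_density x))
       \<and> distributed M lborel (\<lambda>\<omega>. min (side_a (\<phi> \<omega>) (\<psi> \<omega>)) (side_b (\<phi> \<omega>) (\<psi> \<omega>)))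
           (\<lambda>y. ennreal (min_density y))"
proof -
  interpret P: prob_space M by (rule assms(1))
  have ind: "P.indep_var lborel \<phi> lborel \<psi>" using assms(2) by (simp add: P.indep_var_eq)
  have J: "distributed M (lborel \<Otimes>\<^sub>M lborel) (\<lambda>x. (\<phi> x, \<psi> x))
      (\<lambda>(x,y). ennreal (indicator {0..pi} x / pi) * ennreal (indicator {0..pi} y / pi))"
    by (rule P.distributed_joint_indep[OF sigma_finite_lborel sigma_finite_lborel assms(3) assms(4) ind])
  have mxm[measurable]: "mx \<in> borel_measurable borel" unfolding mx_def by measurable
  have mnm[measurable]: "mn \<in> borel_measurable borel" unfolding mn_def by measurable
  have g1: "(\<lambda>p::real\<times>real. max (fst p) (snd p)) \<in> borel_measurable borel"
    by (subst borel_prod[symmetric]) measurable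
  have g2: "(\<lambda>p::real\<times>real. min (fst p) (snd p)) \<in> borel_measurable borel"
    by (subst borel_prod[symmetric]) measurable
  have D1: "distributed M lborel (\<lambda>\<omega>. (\<lambda>p. max (fst p) (snd p)) (side_a (\<phi> \<omega>) (\<psi> \<omega>), side_b (\<phi> \<omega>) (\<psi> \<omega>)))
           (\<lambda>x. ennreal (max_density x))"
  proof (rule dist_generic[OF J g1])
    show "max_density \<in> borel_measurable borel" unfolding max_density_eq[abs_def] by measurable
    fix h :: "real \<Rightarrow> ennreal" assume [measurable]: "h \<in> borel_measurable borel"
    show "ennreal (2/pi\<^sup>2) * Jint (\<lambda>p. h (max (fst p) (snd p))) = (\<integral>\<^sup>+x. ennreal (max_density x) * h x \<partial>lborel)"
      unfolding max_density_eq by (rule key_gen[OF mx_nonneg J_max]) measurable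
  qed
  have D2: "distributed M lborel (\<lambda>\<omega>. (\<lambda>p. min (fst p) (snd p)) (side_a (\<phi> \<omega>) (\<psi> \<omega>), side_b (\<phi> \<omega>) (\<psi> \<omega>)))
           (\<lambda>x. ennreal (min_density x))"
  proof (rule dist_generic[OF J g2])
    show "min_density \<in> borel_measurable borel" unfolding min_density_eq[abs_def] by measurable
    fix h :: "real \<Rightarrow> ennreal" assume [measurable]: "h \<in> borel_measurable borel"
    show "ennreal (2/pi\<^sup>2) * Jint (\<lambda>p. h (min (fst p) (snd p))) = (\<integral>\<^sup>+x. ennreal (min_density x) * h x \<partial>lborel)"
      unfolding min_density_eq by (rule key_gen[OF mn_nonneg J_min]) measurable
  qed
  show ?thesis using D1 D2 by simp
qed

end
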